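(* Let $k$ be a field of characteristic zero, let $S=U(\mathfrak{sl}_2(k))$ be the enveloping algebra with standard basis $E,F,H$ of $\mathfrak{sl}_2(k)$ ($[H,E]=2E$, $[H,F]=-2F$, $[E,F]=H$), let $R=k[E]\subseteq S$ be the subalgebra generated by $E$, and let $f$ be the inclusion. Then the correspondence $\mathbf r\colon\operatorname{Spec} S\to\operatorname{Spec} R$ is not continuous; specifically, for $I=RE$, the set $\mathbf r^{[-1]}V_R(I)$ is not closed in $\operatorname{Spec} S$.
   Context: $\operatorname{Spec}$ carries the Zariski topology, closed sets $V_A(X)=\{P: P\supseteq X\}$. For $P\in\operatorname{Spec} S$, $\mathbf rP$ is the set of prime ideals of $R$ minimal over $P\cap R$; $\mathbf r^{[-1]}V=\{P\in\operatorname{Spec} S:\mathbf rP\subseteq V\}$; $\mathbf r$ is continuous if $\mathbf r^{[-1]}V$ is closed for all closed $V\subseteq\operatorname{Spec} R$. *)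

theory Defs
  imports "HOL-Algebra.Algebra"
begin

datatype gen = gE | gF | gH

text \<open>Free associative unital k-algebra on the letters E, F, H: finitely supported
  functions on words, with concatenation convolution as product.\<close>
definition free_alg :: "(gen list \<Rightarrow> 'k::field) ring" where
  "free_alg = \<lparr> carrier = {p. finite {w. p w \<noteq> 0}},
                monoid.mult = (\<lambda>p q w. \<Sum>i\<le>length w. p (take i w) * q (drop i w)),
                monoid.one = (\<lambda>w. if w = [] then 1 else 0),
                ring.zero = (\<lambda>w. 0),
                ring.add = (\<lambda>p q w. p w + q w) \<rparr>"

definition fa_gen :: "gen \<Rightarrow> gen list \<Rightarrow> 'k::field" where
  "fa_gen g = (\<lambda>w. if w = [g] then 1 else 0)"

definition sl2_rels :: "(gen list \<Rightarrow> 'k::field) set" where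
  "sl2_rels = (let A = (free_alg :: (gen list \<Rightarrow> 'k) ring);
                   E = fa_gen gE; F = fa_gen gF; H = fa_gen gH in
     { (H \<otimes>\<^bsub>A\<^esub> E \<ominus>\<^bsub>A\<^esub> E \<otimes>\<^bsub>A\<^esub> H) \<ominus>\<^bsub>A\<^esub> (E \<oplus>\<^bsub>A\<^esub> E),
       (H \<otimes>\<^bsub>A\<^esub> F \<ominus>\<^bsub>A\<^esub> F \<otimes>\<^bsub>A\<^esub> H) \<oplus>\<^bsub>A\<^esub> (F \<oplus>\<^bsub>A\<^esub> F),
       (E \<otimes>\<^bsub>A\<^esub> F \<ominus>\<^bsub>A\<^esub> F \<otimes>\<^bsub>A\<^esub> E) \<ominus>\<^bsub>A\<^esub> H })"

definition sl2_ideal :: "(gen list \<Rightarrow> 'k::field) set" where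
  "sl2_ideal = genideal (free_alg :: (gen list \<Rightarrow> 'k) ring) sl2_rels"

definition U_sl2 :: "(gen list \<Rightarrow> 'k::field) set ring" where
  "U_sl2 = free_alg Quot sl2_ideal"

definition U_E :: "(gen list \<Rightarrow> 'k::field) set" where
  "U_E = sl2_ideal +>\<^bsub>(free_alg :: (gen list \<Rightarrow> 'k) ring)\<^esub> fa_gen gE"

text \<open>R = k[E], the subalgebra of S generated by E: classes of noncommutative
  polynomials involving only the letter E; as a ring, a substructure of S
  (so f is the inclusion).\<close>
definition kE_sub :: "(gen list \<Rightarrow> 'k::field) set ring" where
  "kE_sub = U_sl2 \<lparr> carrier :=
     {x. \<exists>p \<in> carrier (free_alg :: (gen list \<Rightarrow> 'k) ring).
           (\<forall>w. p w \<noteq> 0 \<longrightarrow> set w \<subseteq> {gE}) \<and>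
           x = sl2_ideal +>\<^bsub>(free_alg :: (gen list \<Rightarrow> 'k) ring)\<^esub> p} \<rparr>"

definition spec :: "('a, 'b) ring_scheme \<Rightarrow> 'a set set" where
  "spec A = {P. ideal P A \<and> P \<noteq> carrier A \<and>
     (\<forall>I J. ideal I A \<longrightarrow> ideal J A \<longrightarrow> (\<forall>a\<in>I. \<forall>b\<in>J. a \<otimes>\<^bsub>A\<^esub> b \<in> P)
            \<longrightarrow> I \<subseteq> P \<or> J \<subseteq> P)}"

definition zar_V :: "('a, 'b) ring_scheme \<Rightarrow> 'a set \<Rightarrow> 'a set set" where
  "zar_V A Y = {Q. Q \<in> spec A \<and> Y \<subseteq> Q}"

definition spec_closed :: "('a, 'b) ring_scheme \<Rightarrow> 'a set set \<Rightarrow> bool" where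
  "spec_closed A Z \<longleftrightarrow> (\<exists>Y. Y \<subseteq> carrier A \<and> Z = zar_V A Y)"

text \<open>For a subring R of S (R a substructure of S): r P = primes of R minimal over P \<inter> R.\<close>
definition corr_r :: "('a, 'b) ring_scheme \<Rightarrow> ('a, 'c) ring_scheme \<Rightarrow> 'a set \<Rightarrow> 'a set set" where
  "corr_r S R P = {Q \<in> spec R. P \<inter> carrier R \<subseteq> Q \<and>
      (\<forall>Q'\<in>spec R. P \<inter> carrier R \<subseteq> Q' \<longrightarrow> Q' \<subseteq> Q \<longrightarrow> Q' = Q)}"

definition corr_preim :: "('a, 'b) ring_scheme \<Rightarrow> ('a, 'c) ring_scheme \<Rightarrow> 'a set set \<Rightarrow> 'a set set" where
  "corr_preim S R V = {P \<in> spec S. corr_r S R P \<subseteq> V}"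

definition corr_continuous :: "('a, 'b) ring_scheme \<Rightarrow> ('a, 'c) ring_scheme \<Rightarrow> bool" where
  "corr_continuous S R \<longleftrightarrow>
     (\<forall>V. spec_closed R V \<longrightarrow> spec_closed S (corr_preim S R V))"

end

theory Submission
  imports Defs "HOL-Computational_Algebra.Polynomial"
begin


lemma fa_carrier: "carrier (free_alg :: (gen list \<Rightarrow> 'k::field) ring) = {p. finite {w. p w \<noteq> 0}}"
  by (simp add: free_alg_def)
lemma fa_mult: "p \<otimes>\<^bsub>(free_alg :: (gen list \<Rightarrow> 'k::field) ring)\<^esub> q = (\<lambda>w. \<Sum>i\<le>length w. p (take i w) * q (drop i w))"
  by (simp add: free_alg_def)
lemma fa_one: "\<one>\<^bsub>(free_alg :: (gen list \<Rightarrow> 'k::field) ring)\<^esub> = (\<lambda>w. if w = [] then 1 else 0)"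
  by (simp add: free_alg_def)
lemma fa_zero: "\<zero>\<^bsub>(free_alg :: (gen list \<Rightarrow> 'k::field) ring)\<^esub> = (\<lambda>w. 0)"
  by (simp add: free_alg_def)
lemma fa_add: "p \<oplus>\<^bsub>(free_alg :: (gen list \<Rightarrow> 'k::field) ring)\<^esub> q = (\<lambda>w. p w + q w)"
  by (simp add: free_alg_def)

definition supp :: "('a \<Rightarrow> 'k::zero) \<Rightarrow> 'a set" where "supp p = {w. p w \<noteq> 0}"

lemma conv_supp:
  fixes p q :: "gen list \<Rightarrow> 'k::field"
  shows "{w. (\<Sum>i\<le>length w. p (take i w) * q (drop i w)) \<noteq> 0} \<subseteq> (\<lambda>(u,v). u @ v) ` ({w. p w \<noteq> 0} \<times> {w. q w \<noteq> 0})"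
proof
  fix w assume "w \<in> {w. (\<Sum>i\<le>length w. p (take i w) * q (drop i w)) \<noteq> 0}"
  then obtain i where "p (take i w) * q (drop i w) \<noteq> 0" 
    by (metis (mono_tags, lifting) mem_Collect_eq sum.neutral)
  then show "w \<in> (\<lambda>(u,v). u @ v) ` ({w. p w \<noteq> 0} \<times> {w. q w \<noteq> 0})"
    by (intro image_eqI[where x="(take i w, drop i w)"]) auto
qed

lemma conv_assoc:
  fixes p q r :: "gen list \<Rightarrow> 'k::field"
  shows "(\<Sum>i\<le>length w. (\<Sum>j\<le>length (take i w). p (take j (take i w)) * q (drop j (take i w))) * r (drop i w))
       = (\<Sum>i\<le>length w. p (take i w) * (\<Sum>j\<le>length (drop i w). q (take j (drop i w)) * r (drop j (drop i w))))"
proof -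
  define n where "n = length w"
  define g where "g = (\<lambda>a m. p (take a w) * q (take m (drop a w)) * r (drop (a+m) w))"
  have "(\<Sum>i\<le>length w. (\<Sum>j\<le>length (take i w). p (take j (take i w)) * q (drop j (take i w))) * r (drop i w))
      = (\<Sum>i\<le>n. \<Sum>j\<le>i. g j (i - j))"
    unfolding n_def g_def
    by (intro sum.cong refl) (auto simp: sum_distrib_right min_def take_drop intro!: sum.cong)
  also have "\<dots> = (\<Sum>(i,j)\<in>{(i,j). i+j \<le> n}. g i j)"
    by (rule sum.triangle_reindex_eq[symmetric])
  also have "\<dots> = (\<Sum>i\<le>n. \<Sum>j\<le>n-i. g i j)"
  proof -
    have "{(i,j). i+j \<le> n} = Sigma {..n} (\<lambda>i. {..n-i})" by auto
    then show ?thesis by (simp add: sum.Sigma)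
  qed
  also have "\<dots> = (\<Sum>i\<le>length w. p (take i w) * (\<Sum>j\<le>length (drop i w). q (take j (drop i w)) * r (drop j (drop i w))))"
    unfolding n_def g_def
    by (intro sum.cong refl) (auto simp: sum_distrib_left mult.assoc add.commute)
  finally show ?thesis .
qed

lemma fin_supp_conv:
  fixes p q :: "gen list \<Rightarrow> 'k::field"
  assumes "finite {w. p w \<noteq> 0}" "finite {w. q w \<noteq> 0}"
  shows "finite {w. (\<Sum>i\<le>length w. p (take i w) * q (drop i w)) \<noteq> 0}"
  using conv_supp[of p q] assms by (meson finite_SigmaI finite_imageI finite_subset)

lemma conv_one_left:
  fixes q :: "gen list \<Rightarrow> 'k::field"
  shows "(\<Sum>i\<le>length w. (if take i w = [] then 1 else 0) * q (drop i w)) = q w"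
proof -
  have "(\<Sum>i\<le>length w. (if take i w = [] then 1 else 0) * q (drop i w)) = (\<Sum>i\<in>{0}. (if take i w = [] then 1 else 0) * q (drop i w))"
    by (intro sum.mono_neutral_right) auto
  then show ?thesis by simp
qed

lemma conv_one_right:
  fixes q :: "gen list \<Rightarrow> 'k::field"
  shows "(\<Sum>i\<le>length w. q (take i w) * (if drop i w = [] then 1 else 0)) = q w"
proof -
  have "(\<Sum>i\<le>length w. q (take i w) * (if drop i w = [] then 1 else 0)) = (\<Sum>i\<in>{length w}. q (take i w) * (if drop i w = [] then 1 else 0))"
    by (intro sum.mono_neutral_right) auto
  then show ?thesis by simp
qed

lemma ring_fa: "ring (free_alg :: (gen list \<Rightarrow> 'k::field) ring)"
proof (rule ringI)
  show "abelian_group (free_alg :: (gen list \<Rightarrow> 'k::field) ring)"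
  proof (rule abelian_groupI)
    fix x y :: "gen list \<Rightarrow> 'k"
    assume "x \<in> carrier free_alg" "y \<in> carrier free_alg"
    then show "x \<oplus>\<^bsub>free_alg\<^esub> y \<in> carrier free_alg"
      unfolding fa_carrier fa_add
      by (auto intro: finite_subset[of _ "{w. x w \<noteq> 0} \<union> {w. y w \<noteq> 0}"])
  next
    fix x :: "gen list \<Rightarrow> 'k"
    assume "x \<in> carrier free_alg"
    then show "\<exists>y\<in>carrier free_alg. y \<oplus>\<^bsub>free_alg\<^esub> x = \<zero>\<^bsub>free_alg\<^esub>"
      unfolding fa_carrier fa_add fa_zero
      by (rule_tac bexI[of _ "\<lambda>w. - x w"]) auto
  qed (auto simp: fa_carrier fa_add fa_zero add.assoc add.commute)
  show "monoid (free_alg :: (gen list \<Rightarrow> 'k::field) ring)"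
  proof (rule monoidI)
    fix x y z :: "gen list \<Rightarrow> 'k"
    show "x \<otimes>\<^bsub>free_alg\<^esub> y \<otimes>\<^bsub>free_alg\<^esub> z = x \<otimes>\<^bsub>free_alg\<^esub> (y \<otimes>\<^bsub>free_alg\<^esub> z)"
      unfolding fa_mult using conv_assoc by (intro ext) blast
  next
    fix x y :: "gen list \<Rightarrow> 'k"
    assume "x \<in> carrier free_alg" "y \<in> carrier free_alg"
    then show "x \<otimes>\<^bsub>free_alg\<^esub> y \<in> carrier free_alg"
      unfolding fa_carrier fa_mult using fin_supp_conv by blast
  next
    show "\<one>\<^bsub>(free_alg :: (gen list \<Rightarrow> 'k::field) ring)\<^esub> \<in> carrier free_alg"
      unfolding fa_carrier fa_one by (auto intro: finite_subset[of _ "{[]}"])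
  qed (simp_all only: fa_mult fa_one conv_one_left conv_one_right)
qed (auto simp: fa_mult fa_add distrib_left distrib_right sum.distrib)

lemma fa_a_inv:
  assumes "p \<in> carrier (free_alg :: (gen list \<Rightarrow> 'k::field) ring)"
  shows "\<ominus>\<^bsub>(free_alg :: (gen list \<Rightarrow> 'k::field) ring)\<^esub> p = (\<lambda>w. - p w)"
proof -
  interpret ring "free_alg :: (gen list \<Rightarrow> 'k::field) ring" by (rule ring_fa)
  have "(\<lambda>w. - p w) \<in> carrier free_alg" using assms by (simp add: fa_carrier)
  then show ?thesis using assms
    by (intro minus_equality) (auto simp: fa_add fa_zero)
qed


definition genact :: "'k::field \<Rightarrow> gen \<Rightarrow> (nat \<Rightarrow> 'k) \<Rightarrow> (nat \<Rightarrow> 'k)" where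
  "genact c g v = (case g of
      gE \<Rightarrow> (\<lambda>i. of_nat (Suc i) * v (Suc i))
    | gH \<Rightarrow> (\<lambda>i. (c - 2 * of_nat i) * v i)
    | gF \<Rightarrow> (\<lambda>i. case i of 0 \<Rightarrow> 0 | Suc j \<Rightarrow> (c - of_nat j) * v j))"

primrec wact :: "'k::field \<Rightarrow> gen list \<Rightarrow> (nat \<Rightarrow> 'k) \<Rightarrow> (nat \<Rightarrow> 'k)" where
  "wact c [] v = v"
| "wact c (g # w) v = genact c g (wact c w v)"

lemma wact_append: "wact c (u @ w) v = wact c u (wact c w v)"
  by (induction u) auto

lemma genact_lin:
  fixes a :: "'x \<Rightarrow> 'k::field"
  shows "genact c g (\<lambda>j. \<Sum>x\<in>S. a x * f x j) i = (\<Sum>x\<in>S. a x * genact c g (f x) i)"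
  by (cases g; cases i) (simp_all add: genact_def sum_distrib_left algebra_simps)

lemma wact_lin:
  fixes a :: "'x \<Rightarrow> 'k::field"
  shows "wact c w (\<lambda>j. \<Sum>x\<in>S. a x * f x j) i = (\<Sum>x\<in>S. a x * wact c w (f x) i)"
proof (induction w arbitrary: i)
  case Nil then show ?case by simp
next
  case (Cons g w)
  have "wact c w (\<lambda>j. \<Sum>x\<in>S. a x * f x j) = (\<lambda>j. \<Sum>x\<in>S. a x * wact c w (f x) j)"
    using Cons.IH by (intro ext)
  then have "wact c (g # w) (\<lambda>j. \<Sum>x\<in>S. a x * f x j) = genact c g (\<lambda>j. \<Sum>x\<in>S. a x * wact c w (f x) j)"
    by simp
  then show ?case by (simp add: genact_lin)
qed

definition act :: "'k::field \<Rightarrow> (gen list \<Rightarrow> 'k) \<Rightarrow> (nat \<Rightarrow> 'k) \<Rightarrow> (nat \<Rightarrow> 'k)" where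
  "act c p v i = (\<Sum>w\<in>{w. p w \<noteq> 0}. p w * wact c w v i)"

lemma act_super:
  assumes "finite S" "{w. p w \<noteq> 0} \<subseteq> S"
  shows "act c p v i = (\<Sum>w\<in>S. p w * wact c w v i)"
  unfolding act_def using assms by (intro sum.mono_neutral_left) auto

abbreviation FA :: "(gen list \<Rightarrow> 'k::field) ring" where "FA \<equiv> free_alg"

lemma act_add:
  assumes "p \<in> carrier FA" "q \<in> carrier FA"
  shows "act c (p \<oplus>\<^bsub>FA\<^esub> q) v i = act c p v i + act c q v i"
proof -
  let ?S = "{w. p w \<noteq> 0} \<union> {w. q w \<noteq> 0}"
  have f: "finite ?S" using assms by (simp add: fa_carrier)
  have "act c (p \<oplus>\<^bsub>FA\<^esub> q) v i = (\<Sum>w\<in>?S. (p \<oplus>\<^bsub>FA\<^esub> q) w * wact c w v i)"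
    by (rule act_super[OF f]) (auto simp: fa_add)
  also have "\<dots> = (\<Sum>w\<in>?S. (p w + q w) * wact c w v i)" by (simp add: fa_add)
  also have "\<dots> = (\<Sum>w\<in>?S. p w * wact c w v i) + (\<Sum>w\<in>?S. q w * wact c w v i)"
    by (simp add: distrib_right sum.distrib)
  also have "\<dots> = act c p v i + act c q v i"
    using act_super[OF f, of p] act_super[OF f, of q] by auto
  finally show ?thesis .
qed

lemma act_neg:
  assumes "p \<in> carrier FA"
  shows "act c (\<ominus>\<^bsub>FA\<^esub> p) v i = - act c p v i"
  using assms by (simp add: fa_a_inv act_def sum_negf)

lemma act_minus:
  assumes "p \<in> carrier FA" "q \<in> carrier FA"
  shows "act c (p \<ominus>\<^bsub>FA\<^esub> q) v i = act c p v i - act c q v i"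
proof -
  interpret ring "FA :: (gen list \<Rightarrow> 'k::field) ring" by (rule ring_fa)
  show ?thesis using assms by (simp add: a_minus_def act_add act_neg)
qed

lemma act_zero: "act c \<zero>\<^bsub>FA\<^esub> v i = 0"
  by (simp add: act_def fa_zero)

lemma take_len_app: "take (length a) (a @ b) = a" by simp
lemma drop_len_app: "drop (length a) (a @ b) = b" by simp

lemma act_mult:
  fixes p q :: "gen list \<Rightarrow> 'k::field"
  assumes "p \<in> carrier FA" "q \<in> carrier FA"
  shows "act c (p \<otimes>\<^bsub>FA\<^esub> q) v i = act c p (act c q v) i"
proof -
  define Sp where "Sp = {w. p w \<noteq> 0}"
  define Sq where "Sq = {w. q w \<noteq> 0}"
  have fp: "finite Sp" and fq: "finite Sq" using assms by (auto simp: fa_carrier Sp_def Sq_def)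
  define W where "W = (\<lambda>(u,v). u @ v) ` (Sp \<times> Sq)"
  have fW: "finite W" using fp fq by (simp add: W_def)
  define T where "T = {(w,t). w \<in> W \<and> t \<le> length w \<and> take t w \<in> Sp \<and> drop t w \<in> Sq}"
  define G where "G = (\<lambda>(w,t). p (take t w) * q (drop t w) * wact c w v i)"
  have "act c p (act c q v) i = (\<Sum>u\<in>Sp. p u * (\<Sum>x\<in>Sq. q x * wact c u (wact c x v) i))"
    unfolding act_def Sp_def Sq_def by (simp add: wact_lin)
  also have "\<dots> = (\<Sum>(u,x)\<in>Sp \<times> Sq. p u * q x * wact c (u @ x) v i)"
    by (simp add: sum.cartesian_product sum_distrib_left wact_append mult.assoc)
  also have "\<dots> = (\<Sum>(w,t)\<in>T. G (w,t))"
    unfolding G_def T_def W_def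
    by (rule sum.reindex_bij_witness[where j="\<lambda>(u,x). (u @ x, length u)" and i="\<lambda>(w,t). (take t w, drop t w)"])
       (auto simp del: take_append drop_append simp add: take_len_app drop_len_app)
  also have "\<dots> = (\<Sum>(w,t)\<in>Sigma W (\<lambda>w. {..length w}). G (w,t))"
    by (rule sum.mono_neutral_left) (auto simp: T_def G_def Sp_def Sq_def fW)
  also have "\<dots> = (\<Sum>w\<in>W. (\<Sum>t\<le>length w. p (take t w) * q (drop t w)) * wact c w v i)"
    by (simp add: sum.Sigma[symmetric] G_def sum_distrib_right fW)
  also have "\<dots> = act c (p \<otimes>\<^bsub>FA\<^esub> q) v i"
    unfolding fa_mult
    by (rule act_super[symmetric, OF fW]) (use conv_supp[of p q] in \<open>auto simp: W_def Sp_def Sq_def\<close>)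
  finally show ?thesis by simp
qed


definition Kc :: "'k::field \<Rightarrow> (gen list \<Rightarrow> 'k) set" where
  "Kc c = {p \<in> carrier FA. \<forall>v i. act c p v i = 0}"

lemma wact_0: "wact c w (\<lambda>_. 0) = (\<lambda>_. 0)"
  by (induction w) (auto simp: genact_def split: gen.splits nat.splits intro!: ext)

lemma act_0v: "act c p (\<lambda>_. 0) i = 0"
  by (simp add: act_def wact_0)

lemma Kc_ideal: "ideal (Kc c) (FA :: (gen list \<Rightarrow> 'k::field) ring)"
proof -
  interpret R: ring "FA :: (gen list \<Rightarrow> 'k::field) ring" by (rule ring_fa)
  have sub: "Kc c \<subseteq> carrier (FA :: (gen list \<Rightarrow> 'k::field) ring)" by (auto simp: Kc_def)
  have ne: "Kc c \<noteq> {}" using act_zero[of c] R.zero_closed by (auto simp: Kc_def)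
  have inv: "\<ominus>\<^bsub>FA\<^esub> a \<in> Kc c" if "a \<in> Kc c" for a
    using that act_neg[of a c] by (auto simp: Kc_def)
  have add: "a \<oplus>\<^bsub>FA\<^esub> b \<in> Kc c" if "a \<in> Kc c" "b \<in> Kc c" for a b
    using that act_add[of a b c] by (auto simp: Kc_def)
  have sg: "subgroup (Kc c) (add_monoid (FA :: (gen list \<Rightarrow> 'k::field) ring))"
    using R.add.subgroupI[of "Kc c"] sub ne inv add by (simp add: a_inv_def)
  show ?thesis
  proof (rule idealI[OF ring_fa sg])
    fix a x assume "a \<in> Kc c" "x \<in> carrier (FA :: (gen list \<Rightarrow> 'k::field) ring)"
    then show "x \<otimes>\<^bsub>FA\<^esub> a \<in> Kc c"
    proof -
      have "act c a v = (\<lambda>_. 0)" for v using \<open>a \<in> Kc c\<close> by (auto simp: Kc_def)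
      then show ?thesis using \<open>a \<in> Kc c\<close> \<open>x \<in> carrier FA\<close> act_mult[of x a c] R.m_closed[of x a] act_0v
        by (auto simp: Kc_def)
    qed
  next
    fix a x assume "a \<in> Kc c" "x \<in> carrier (FA :: (gen list \<Rightarrow> 'k::field) ring)"
    then show "a \<otimes>\<^bsub>FA\<^esub> x \<in> Kc c"
      using act_mult[of a x c] by (auto simp: Kc_def)
  qed
qed

lemma fa_gen_carrier: "fa_gen g \<in> carrier (FA :: (gen list \<Rightarrow> 'k::field) ring)"
  unfolding fa_carrier fa_gen_def by (auto intro: finite_subset[of _ "{[g]}"])

lemma act_gen: "act c (fa_gen g) v i = genact c g v i"
proof -
  have "act c (fa_gen g) v i = (\<Sum>w\<in>{[g]}. fa_gen g w * wact c w v i)"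
    by (rule act_super) (auto simp: fa_gen_def)
  then show ?thesis by (simp add: fa_gen_def)
qed

lemma act_gen_fun: "act c (fa_gen g) v = genact c g v"
  by (intro ext act_gen)

lemma rels_Kc: "sl2_rels \<subseteq> Kc (c::'k::field)"
proof -
  interpret R: ring "FA :: (gen list \<Rightarrow> 'k::field) ring" by (rule ring_fa)
  note cr = fa_gen_carrier[where 'k='k]
  have E1: "act c (fa_gen gH \<otimes>\<^bsub>FA\<^esub> fa_gen gE \<ominus>\<^bsub>FA\<^esub> fa_gen gE \<otimes>\<^bsub>FA\<^esub> fa_gen gH \<ominus>\<^bsub>FA\<^esub> (fa_gen gE \<oplus>\<^bsub>FA\<^esub> fa_gen gE)) v i = 0" for v i
    using cr by (simp add: act_minus act_add act_mult act_gen act_gen_fun)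
       (simp add: genact_def algebra_simps)
  have E2: "act c (fa_gen gH \<otimes>\<^bsub>FA\<^esub> fa_gen gF \<ominus>\<^bsub>FA\<^esub> fa_gen gF \<otimes>\<^bsub>FA\<^esub> fa_gen gH \<oplus>\<^bsub>FA\<^esub> (fa_gen gF \<oplus>\<^bsub>FA\<^esub> fa_gen gF)) v i = 0" for v i
    using cr by (simp add: act_minus act_add act_mult act_gen act_gen_fun)
       (cases i, simp_all add: genact_def algebra_simps)
  have E3: "act c (fa_gen gE \<otimes>\<^bsub>FA\<^esub> fa_gen gF \<ominus>\<^bsub>FA\<^esub> fa_gen gF \<otimes>\<^bsub>FA\<^esub> fa_gen gE \<ominus>\<^bsub>FA\<^esub> fa_gen gH) v i = 0" for v i
    using cr by (simp add: act_minus act_add act_mult act_gen act_gen_fun)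
       (cases i, simp_all add: genact_def algebra_simps)
  show ?thesis unfolding sl2_rels_def Let_def Kc_def
    using E1 E2 E3 cr by auto
qed

lemma I_ideal: "ideal (sl2_ideal :: (gen list \<Rightarrow> 'k::field) set) FA"
proof -
  interpret R: ring "FA :: (gen list \<Rightarrow> 'k::field) ring" by (rule ring_fa)
  have "sl2_rels \<subseteq> carrier (FA :: (gen list \<Rightarrow> 'k::field) ring)"
    using rels_Kc[where 'k='k] by (auto simp: Kc_def)
  then show ?thesis unfolding sl2_ideal_def by (rule R.genideal_ideal)
qed

lemma I_Kc: "(sl2_ideal :: (gen list \<Rightarrow> 'k::field) set) \<subseteq> Kc c"
proof -
  interpret R: ring "FA :: (gen list \<Rightarrow> 'k::field) ring" by (rule ring_fa)
  show ?thesis unfolding sl2_ideal_def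
    by (rule R.genideal_minimal[OF Kc_ideal rels_Kc])
qed


abbreviation II :: "(gen list \<Rightarrow> 'k::field) set" where "II \<equiv> sl2_ideal"
abbreviation UU :: "(gen list \<Rightarrow> 'k::field) set ring" where "UU \<equiv> U_sl2"

lemma U_ring: "ring (UU :: (gen list \<Rightarrow> 'k::field) set ring)"
  unfolding U_sl2_def by (rule ideal.quotient_is_ring[OF I_ideal])

lemma U_carrier: "x \<in> carrier (UU :: (gen list \<Rightarrow> 'k::field) set ring) \<longleftrightarrow> (\<exists>p\<in>carrier FA. x = II +>\<^bsub>FA\<^esub> p)"
  unfolding U_sl2_def FactRing_def by (auto simp: A_RCOSETS_def')

lemma U_hom: "(a_r_coset FA II) \<in> ring_hom (FA :: (gen list \<Rightarrow> 'k::field) ring) UU"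
  unfolding U_sl2_def by (rule ideal.rcos_ring_hom[OF I_ideal])

lemma U_mult:
  assumes "p \<in> carrier (FA :: (gen list \<Rightarrow> 'k::field) ring)" "q \<in> carrier (FA :: (gen list \<Rightarrow> 'k::field) ring)"
  shows "(II +>\<^bsub>FA\<^esub> p) \<otimes>\<^bsub>UU\<^esub> (II +>\<^bsub>FA\<^esub> q) = II +>\<^bsub>FA\<^esub> (p \<otimes>\<^bsub>FA\<^esub> q)"
  using ring_hom_mult[OF U_hom assms] by simp

lemma U_add:
  assumes "p \<in> carrier (FA :: (gen list \<Rightarrow> 'k::field) ring)" "q \<in> carrier (FA :: (gen list \<Rightarrow> 'k::field) ring)"
  shows "(II +>\<^bsub>FA\<^esub> p) \<oplus>\<^bsub>UU\<^esub> (II +>\<^bsub>FA\<^esub> q) = II +>\<^bsub>FA\<^esub> (p \<oplus>\<^bsub>FA\<^esub> q)"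
  using ring_hom_add[OF U_hom assms] by simp

lemma U_one: "\<one>\<^bsub>(UU :: (gen list \<Rightarrow> 'k::field) set ring)\<^esub> = II +>\<^bsub>FA\<^esub> \<one>\<^bsub>FA\<^esub>"
  unfolding U_sl2_def FactRing_def by simp

lemma U_zero: "\<zero>\<^bsub>(UU :: (gen list \<Rightarrow> 'k::field) set ring)\<^esub> = II"
  unfolding U_sl2_def FactRing_def by simp

lemma coset_eq_I:
  assumes "p \<in> carrier (FA :: (gen list \<Rightarrow> 'k::field) ring)"
  shows "(II +>\<^bsub>FA\<^esub> p) = II \<longleftrightarrow> p \<in> II"
  using ideal.rcos_const_imp_mem[OF I_ideal assms] ring.a_rcos_zero[OF ring_fa I_ideal] by blast


definition Vl :: "nat \<Rightarrow> (nat \<Rightarrow> 'k::field) set" where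
  "Vl l = {v. \<forall>i>l. v i = 0}"

lemma genact_V:
  assumes "v \<in> Vl l" shows "genact (of_nat l) g v \<in> Vl l"
proof -
  have F: "(case i of 0 \<Rightarrow> 0 | Suc j \<Rightarrow> (of_nat l - of_nat j) * v j) = 0" if "i > l" for i
  proof (cases i)
    case (Suc j)
    show ?thesis
    proof (cases "j = l")
      case False then have "j > l" using Suc that by simp
      then show ?thesis using assms Suc by (simp add: Vl_def)
    qed (simp add: Suc)
  qed simp
  show ?thesis using assms F by (cases g) (auto simp: Vl_def genact_def)
qed

lemma wact_V: "v \<in> Vl l \<Longrightarrow> wact (of_nat l) w v \<in> Vl l"
  by (induction w) (auto simp: genact_V)

lemma act_V: "v \<in> Vl l \<Longrightarrow> act (of_nat l) p v \<in> Vl l"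
  using wact_V[of v l] unfolding Vl_def act_def by (auto intro!: ext)

definition Jl :: "nat \<Rightarrow> (gen list \<Rightarrow> 'k::field) set" where
  "Jl l = {p \<in> carrier FA. \<forall>v\<in>Vl l. \<forall>i. act (of_nat l) p v i = 0}"

lemma Jl_ideal: "ideal (Jl l) (FA :: (gen list \<Rightarrow> 'k::field) ring)"
proof -
  interpret R: ring "FA :: (gen list \<Rightarrow> 'k::field) ring" by (rule ring_fa)
  have sub: "Jl l \<subseteq> carrier (FA :: (gen list \<Rightarrow> 'k::field) ring)" by (auto simp: Jl_def)
  have "\<zero>\<^bsub>(FA :: (gen list \<Rightarrow> 'k::field) ring)\<^esub> \<in> Jl l" using R.zero_closed by (simp add: Jl_def act_zero)
  then have ne: "(Jl l :: (gen list \<Rightarrow> 'k::field) set) \<noteq> {}" by auto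
  have inv: "\<ominus>\<^bsub>FA\<^esub> a \<in> Jl l" if "a \<in> Jl l" for a :: "gen list \<Rightarrow> 'k::field"
    using that act_neg[of a] by (auto simp: Jl_def)
  have add: "a \<oplus>\<^bsub>FA\<^esub> b \<in> Jl l" if "a \<in> Jl l" "b \<in> Jl l" for a b :: "gen list \<Rightarrow> 'k::field"
    using that act_add[of a b] by (auto simp: Jl_def)
  have sg: "subgroup (Jl l) (add_monoid (FA :: (gen list \<Rightarrow> 'k::field) ring))"
    using R.add.subgroupI[of "Jl l"] sub ne inv add by (simp add: a_inv_def)
  show ?thesis
  proof (rule idealI[OF ring_fa sg])
    fix a x :: "gen list \<Rightarrow> 'k::field" assume a: "a \<in> Jl l" and x: "x \<in> carrier (FA :: (gen list \<Rightarrow> 'k::field) ring)"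
    have "act (of_nat l) a v = (\<lambda>_. 0)" if "v \<in> Vl l" for v using a that by (auto simp: Jl_def)
    then show "x \<otimes>\<^bsub>FA\<^esub> a \<in> Jl l" using a x act_mult[of x a] R.m_closed[of x a] act_0v
      by (auto simp: Jl_def)
  next
    fix a x :: "gen list \<Rightarrow> 'k::field" assume a: "a \<in> Jl l" and x: "x \<in> carrier (FA :: (gen list \<Rightarrow> 'k::field) ring)"
    then show "a \<otimes>\<^bsub>FA\<^esub> x \<in> Jl l"
      using act_mult[of a x] act_V[of _ l x] R.m_closed[of a x] by (auto simp: Jl_def)
  qed
qed

lemma I_Jl: "(II :: (gen list \<Rightarrow> 'k::field) set) \<subseteq> Jl l"
  using I_Kc by (fastforce simp: Kc_def Jl_def)

definition JQ :: "(gen list \<Rightarrow> 'k::field) set" where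
  "JQ = {p \<in> carrier FA. \<forall>l. p \<in> Jl l}"

lemma JQ_ideal: "ideal (JQ :: (gen list \<Rightarrow> 'k::field) set) FA"
proof -
  interpret R: ring "FA :: (gen list \<Rightarrow> 'k::field) ring" by (rule ring_fa)
  have "JQ = \<Inter>(range Jl) \<inter> carrier (FA :: (gen list \<Rightarrow> 'k::field) ring)" by (auto simp: JQ_def)
  also have "\<dots> = \<Inter>(range Jl)" by (auto simp: Jl_def)
  finally have e: "(JQ :: (gen list \<Rightarrow> 'k::field) set) = \<Inter>(range Jl)" .
  show ?thesis unfolding e by (rule R.i_Intersect) (auto intro: Jl_ideal)
qed

lemma I_JQ: "(II :: (gen list \<Rightarrow> 'k::field) set) \<subseteq> JQ"
  using I_Jl by (fastforce simp: JQ_def Jl_def)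

lemma img_mem:
  assumes J: "ideal J (FA :: (gen list \<Rightarrow> 'k::field) ring)" and IJ: "II \<subseteq> J"
    and p: "p \<in> carrier (FA :: (gen list \<Rightarrow> 'k::field) ring)"
  shows "(II +>\<^bsub>FA\<^esub> p) \<in> a_r_coset FA II ` J \<longleftrightarrow> p \<in> J"
proof
  interpret R: ring "FA :: (gen list \<Rightarrow> 'k::field) ring" by (rule ring_fa)
  assume "(II +>\<^bsub>FA\<^esub> p) \<in> a_r_coset FA II ` J"
  then obtain j where j: "j \<in> J" "II +>\<^bsub>FA\<^esub> p = II +>\<^bsub>FA\<^esub> j" by auto
  have "\<zero>\<^bsub>FA\<^esub> \<in> II" using ideal.axioms(1)[OF I_ideal] additive_subgroup.zero_closed by blast
  then have "\<zero>\<^bsub>FA\<^esub> \<oplus>\<^bsub>FA\<^esub> p \<in> II +>\<^bsub>FA\<^esub> p" by (auto simp: a_r_coset_def')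
  then have "p \<in> II +>\<^bsub>FA\<^esub> j" using p j by simp
  then obtain h where "h \<in> II" "p = h \<oplus>\<^bsub>FA\<^esub> j" by (auto simp: a_r_coset_def')
  then show "p \<in> J" using IJ j(1) additive_subgroup.a_closed[OF ideal.axioms(1)[OF J], of h j] by auto
qed auto

definition Pl :: "nat \<Rightarrow> (gen list \<Rightarrow> 'k::field) set set" where
  "Pl l = a_r_coset FA II ` Jl l"

definition Qq :: "(gen list \<Rightarrow> 'k::field) set set" where
  "Qq = a_r_coset FA II ` JQ"

lemma Pl_ideal: "ideal (Pl l) (UU :: (gen list \<Rightarrow> 'k::field) set ring)"
  unfolding Pl_def U_sl2_def by (rule ring.ring_ideal_imp_quot_ideal[OF ring_fa I_ideal Jl_ideal])

lemma Qq_ideal: "ideal (Qq :: (gen list \<Rightarrow> 'k::field) set set) UU"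
  unfolding Qq_def U_sl2_def by (rule ring.ring_ideal_imp_quot_ideal[OF ring_fa I_ideal JQ_ideal])


lemma wact_scal: "wact c w (\<lambda>j. s * f j) i = s * wact c w f i"
  using wact_lin[of c w "\<lambda>_::unit. s" "\<lambda>_. f" "{()}" i] by simp

lemma wact_E: "wact c (replicate n gE) w i = pochhammer (of_nat (Suc i)) n * w (i + n)"
proof (induction n arbitrary: i)
  case 0 then show ?case by simp
next
  case (Suc n)
  have "wact c (replicate (Suc n) gE) w i = of_nat (Suc i) * wact c (replicate n gE) w (Suc i)"
    by (simp add: genact_def)
  also have "\<dots> = of_nat (Suc i) * (pochhammer (of_nat (Suc (Suc i))) n * w (Suc i + n))"
    by (simp only: Suc.IH)
  also have "\<dots> = pochhammer (of_nat (Suc i)) (Suc n) * w (i + Suc n)"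
    by (simp add: pochhammer_rec algebra_simps)
  finally show ?case .
qed

lemma wact_F: "wact c (replicate j gF) (\<lambda>i. if i = 0 then 1 else 0) i = (if i = j then (\<Prod>t<j. c - of_nat t) else 0)"
proof (induction j arbitrary: i)
  case 0 then show ?case by simp
next
  case (Suc j)
  show ?case
  proof (cases i)
    case 0 then show ?thesis by (simp add: genact_def)
  next
    case (Suc i')
    have "wact c (replicate (Suc j) gF) (\<lambda>i. if i = 0 then 1 else 0) i = (c - of_nat i') * wact c (replicate j gF) (\<lambda>i. if i = 0 then 1 else 0) i'"
      using Suc by (simp add: genact_def)
    then show ?thesis using Suc.IH[of i'] Suc by (simp add: mult.commute)
  qed
qed

lemma prodF_nz:
  assumes "j \<le> l"
  shows "(\<Prod>t<j. (of_nat l :: 'k::field_char_0) - of_nat t) \<noteq> 0"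
  using assms by (auto simp: prod_zero_iff)

lemma transitive:
  fixes w v0 :: "nat \<Rightarrow> 'k::field_char_0"
  assumes w: "w \<in> Vl l" "w i0 \<noteq> 0" and v0: "v0 \<in> Vl l"
  shows "\<exists>u\<in>carrier FA. act (of_nat l) u w = v0"
proof -
  define c :: 'k where "c = of_nat l"
  have fin: "finite {i. w i \<noteq> 0}" using w(1) by (auto simp: Vl_def intro: finite_subset[of _ "{..l}"] leI)
  define d where "d = Max {i. w i \<noteq> 0}"
  have wd: "w d \<noteq> 0" using fin w(2) Max_in[of "{i. w i \<noteq> 0}"] by (auto simp: d_def)
  have wgt: "w i = 0" if "i > d" for i
  proof (rule ccontr)
    assume "w i \<noteq> 0"
    then have "i \<le> d" using fin Max_ge[of "{i. w i \<noteq> 0}" i] by (simp add: d_def)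
    then show False using that by simp
  qed
  define D where "D = fact d * w d"
  have Dnz: "D \<noteq> 0" using wd by (simp add: D_def)
  have Ed: "wact c (replicate d gE) w = (\<lambda>i. D * (if i = 0 then 1 else 0))"
  proof
    fix i show "wact c (replicate d gE) w i = D * (if i = 0 then 1 else 0)"
      using wgt[of "i + d"] by (cases "i = 0") (auto simp: wact_E D_def pochhammer_fact)
  qed
  define P where "P j = (\<Prod>t<j. c - of_nat t)" for j
  define word where "word j = replicate j gF @ replicate d gE" for j
  have wword: "wact c (word j) w i = D * (if i = j then P j else 0)" for j i
    unfolding word_def wact_append Ed wact_scal wact_F P_def by simp
  have inj: "inj_on word {..l}"
    by (rule inj_onI) (auto simp: word_def dest: arg_cong[of _ _ length])
  define coef where "coef j = v0 j / (D * P j)" for j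
  define u where "u x = (if x \<in> word ` {..l} then coef (length x - d) else 0)" for x
  have uw: "u (word j) = coef j" if "j \<le> l" for j
    using that by (simp add: u_def word_def)
  have fS: "finite (word ` {..l})" by simp
  have uc: "u \<in> carrier FA"
    unfolding fa_carrier by (auto simp: u_def intro: finite_subset[OF _ fS] split: if_splits)
  have "act c u w i = v0 i" for i
  proof -
    have "act c u w i = (\<Sum>x\<in>word ` {..l}. u x * wact c x w i)"
      by (rule act_super[OF fS]) (auto simp: u_def split: if_splits)
    also have "\<dots> = (\<Sum>j\<le>l. u (word j) * wact c (word j) w i)"
      by (simp add: sum.reindex[OF inj])
    also have "\<dots> = (\<Sum>j\<le>l. coef j * (D * (if i = j then P j else 0)))"
      by (intro sum.cong refl) (simp add: uw wword)
    also have "\<dots> = (if i \<le> l then coef i * (D * P i) else 0)"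
      by (simp add: if_distrib[of "\<lambda>x. _ * (_ * x)"] sum.delta cong: if_cong)
    also have "\<dots> = v0 i"
      using v0 Dnz prodF_nz[of i l] by (auto simp: coef_def P_def c_def Vl_def)
    finally show ?thesis .
  qed
  then show ?thesis using uc by (auto simp: c_def)
qed


lemma act_one: "act c \<one>\<^bsub>FA\<^esub> v i = v i"
proof -
  have "act c \<one>\<^bsub>FA\<^esub> v i = (\<Sum>w\<in>{[]}. \<one>\<^bsub>FA\<^esub> w * wact c w v i)"
    by (rule act_super) (auto simp: fa_one)
  then show ?thesis by (simp add: fa_one)
qed

lemma one_notin_Jl: "\<one>\<^bsub>FA\<^esub> \<notin> (Jl l :: (gen list \<Rightarrow> 'k::field) set)"
proof
  assume "\<one>\<^bsub>FA\<^esub> \<in> (Jl l :: (gen list \<Rightarrow> 'k::field) set)"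
  moreover have "(\<lambda>i. if i = 0 then 1 else 0 :: 'k) \<in> Vl l" by (simp add: Vl_def)
  ultimately have "act (of_nat l) \<one>\<^bsub>FA\<^esub> (\<lambda>i. if i = 0 then 1 else 0 :: 'k) 0 = 0"
    by (auto simp: Jl_def)
  then show False by (simp add: act_one)
qed

lemma memPl:
  assumes "p \<in> carrier (FA :: (gen list \<Rightarrow> 'k::field) ring)"
  shows "(II +>\<^bsub>FA\<^esub> p) \<in> Pl l \<longleftrightarrow> p \<in> Jl l"
  unfolding Pl_def by (rule img_mem[OF Jl_ideal I_Jl assms])

lemma memQq:
  assumes "p \<in> carrier (FA :: (gen list \<Rightarrow> 'k::field) ring)"
  shows "(II +>\<^bsub>FA\<^esub> p) \<in> Qq \<longleftrightarrow> p \<in> JQ"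
  unfolding Qq_def by (rule img_mem[OF JQ_ideal I_JQ assms])

lemma one_U_carrier: "\<one>\<^bsub>(UU :: (gen list \<Rightarrow> 'k::field) set ring)\<^esub> \<in> carrier UU"
  using ring.ring_simprules(6)[OF U_ring] by blast

lemma Pl_proper: "Pl l \<noteq> carrier (UU :: (gen list \<Rightarrow> 'k::field) set ring)"
proof
  assume "Pl l = carrier (UU :: (gen list \<Rightarrow> 'k::field) set ring)"
  then have "\<one>\<^bsub>(UU :: (gen list \<Rightarrow> 'k::field) set ring)\<^esub> \<in> Pl l" using one_U_carrier by blast
  moreover have c1: "\<one>\<^bsub>(FA :: (gen list \<Rightarrow> 'k::field) ring)\<^esub> \<in> carrier FA"
    by (rule ring.ring_simprules(6)[OF ring_fa])
  ultimately have "\<one>\<^bsub>FA\<^esub> \<in> (Jl l :: (gen list \<Rightarrow> 'k::field) set)"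
    using memPl[OF c1] by (simp add: U_one)
  then show False using one_notin_Jl by blast
qed

lemma notin_Jl:
  assumes "p \<in> carrier FA" "p \<notin> (Jl l :: (gen list \<Rightarrow> 'k::field) set)"
  shows "\<exists>v\<in>Vl l. \<exists>i. act (of_nat l) p v i \<noteq> 0"
  using assms by (auto simp: Jl_def)

lemma Pl_prime:
  assumes I1: "ideal I1 (UU :: (gen list \<Rightarrow> 'k::field_char_0) set ring)" and J1: "ideal J1 (UU :: (gen list \<Rightarrow> 'k::field_char_0) set ring)"
    and prod: "\<forall>a\<in>I1. \<forall>b\<in>J1. a \<otimes>\<^bsub>UU\<^esub> b \<in> Pl l"
  shows "I1 \<subseteq> Pl l \<or> J1 \<subseteq> Pl l"
proof (rule ccontr)
  interpret R: ring "FA :: (gen list \<Rightarrow> 'k::field_char_0) ring" by (rule ring_fa)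
  assume "\<not> (I1 \<subseteq> Pl l \<or> J1 \<subseteq> Pl l)"
  then obtain a b where a: "a \<in> I1" "a \<notin> Pl l" and b: "b \<in> J1" "b \<notin> Pl l" by auto
  have "a \<in> carrier UU" using a(1) I1 ideal.axioms(1) additive_subgroup.a_subset by blast
  then obtain p where p: "p \<in> carrier FA" "a = II +>\<^bsub>FA\<^esub> p" using U_carrier by blast
  have "b \<in> carrier UU" using b(1) J1 ideal.axioms(1) additive_subgroup.a_subset by blast
  then obtain q where q: "q \<in> carrier FA" "b = II +>\<^bsub>FA\<^esub> q" using U_carrier by blast
  have pn: "p \<notin> Jl l" using a(2) p memPl by blast
  have qn: "q \<notin> Jl l" using b(2) q memPl by blast
  obtain v0 i0 where v0: "v0 \<in> Vl l" "act (of_nat l) p v0 i0 \<noteq> 0" using notin_Jl[OF p(1) pn] by blast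
  obtain v1 i1 where v1: "v1 \<in> Vl l" "act (of_nat l) q v1 i1 \<noteq> 0" using notin_Jl[OF q(1) qn] by blast
  have wV: "act (of_nat l) q v1 \<in> Vl l" using act_V[OF v1(1)] .
  obtain u where u: "u \<in> carrier FA" "act (of_nat l) u (act (of_nat l) q v1) = v0"
    using transitive[OF wV v1(2) v0(1)] by blast
  have "a \<otimes>\<^bsub>UU\<^esub> (II +>\<^bsub>FA\<^esub> u) \<in> I1"
    using ideal.I_r_closed[OF I1 a(1)] U_carrier u(1) by blast
  then have "(a \<otimes>\<^bsub>UU\<^esub> (II +>\<^bsub>FA\<^esub> u)) \<otimes>\<^bsub>UU\<^esub> b \<in> Pl l" using prod b(1) by blast
  moreover have "(a \<otimes>\<^bsub>UU\<^esub> (II +>\<^bsub>FA\<^esub> u)) \<otimes>\<^bsub>UU\<^esub> b = II +>\<^bsub>FA\<^esub> ((p \<otimes>\<^bsub>FA\<^esub> u) \<otimes>\<^bsub>FA\<^esub> q)"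
    using p q u by (simp add: U_mult)
  ultimately have "(p \<otimes>\<^bsub>FA\<^esub> u) \<otimes>\<^bsub>FA\<^esub> q \<in> Jl l"
    using memPl p(1) q(1) u(1) by (metis R.m_closed)
  then have "act (of_nat l) ((p \<otimes>\<^bsub>FA\<^esub> u) \<otimes>\<^bsub>FA\<^esub> q) v1 i0 = 0" using v1(1) by (auto simp: Jl_def)
  moreover have "act (of_nat l) ((p \<otimes>\<^bsub>FA\<^esub> u) \<otimes>\<^bsub>FA\<^esub> q) v1 i0 = act (of_nat l) p v0 i0"
  proof -
    have "act (of_nat l) ((p \<otimes>\<^bsub>FA\<^esub> u) \<otimes>\<^bsub>FA\<^esub> q) v1 i0 = act (of_nat l) (p \<otimes>\<^bsub>FA\<^esub> u) (act (of_nat l) q v1) i0"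
      using p(1) q(1) u(1) by (simp add: act_mult)
    also have "\<dots> = act (of_nat l) p (act (of_nat l) u (act (of_nat l) q v1)) i0"
      using p(1) u(1) by (simp add: act_mult)
    finally show ?thesis using u(2) by simp
  qed
  ultimately show False using v0(2) by simp
qed

lemma Pl_spec: "Pl l \<in> spec (UU :: (gen list \<Rightarrow> 'k::field_char_0) set ring)"
  unfolding spec_def using Pl_ideal Pl_proper Pl_prime by blast


definition polyfun :: "('k::field \<Rightarrow> 'k) \<Rightarrow> bool" where
  "polyfun f \<longleftrightarrow> (\<exists>P. \<forall>x. f x = poly P x)"

lemma polyfun_const: "polyfun (\<lambda>_. a)"
  unfolding polyfun_def by (rule exI[of _ "[:a:]"]) simp

lemma polyfun_id: "polyfun (\<lambda>x. x)"
  unfolding polyfun_def by (rule exI[of _ "[:0, 1:]"]) simp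

lemma polyfun_add: "polyfun f \<Longrightarrow> polyfun g \<Longrightarrow> polyfun (\<lambda>x. f x + g x)"
  unfolding polyfun_def by (metis poly_add)

lemma polyfun_mult: "polyfun f \<Longrightarrow> polyfun g \<Longrightarrow> polyfun (\<lambda>x. f x * g x)"
  unfolding polyfun_def by (metis poly_mult)

lemma polyfun_diff: "polyfun f \<Longrightarrow> polyfun g \<Longrightarrow> polyfun (\<lambda>x. f x - g x)"
  unfolding polyfun_def by (metis poly_diff)

lemma polyfun_sum: "(\<And>w. w \<in> S \<Longrightarrow> polyfun (F w)) \<Longrightarrow> polyfun (\<lambda>x. \<Sum>w\<in>S. F w x)"
proof (induction S rule: infinite_finite_induct)
  case (infinite A) then show ?case by (simp add: polyfun_const)
next
  case empty then show ?case by (simp add: polyfun_const)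
next
  case (insert a A) then show ?case by (simp add: polyfun_add)
qed

lemma genact_poly:
  assumes "\<And>i. polyfun (\<lambda>c. V c i)"
  shows "polyfun (\<lambda>c. genact c g (V c) i)"
proof (cases g)
  case gE then show ?thesis using assms by (simp add: genact_def polyfun_mult polyfun_const)
next
  case gH then show ?thesis using assms
    by (simp add: genact_def polyfun_mult polyfun_const polyfun_diff polyfun_id)
next
  case gF then show ?thesis using assms
    by (cases i) (simp_all add: genact_def polyfun_mult polyfun_const polyfun_diff polyfun_id)
qed

lemma wact_poly:
  assumes "\<And>i. polyfun (\<lambda>c. V c i)"
  shows "polyfun (\<lambda>c. wact c w (V c) i)"
  using assms by (induction w arbitrary: i) (auto intro: genact_poly)

lemma act_poly: "polyfun (\<lambda>c. act c p v i)"
  unfolding act_def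
  by (rule polyfun_sum, rule polyfun_mult[OF polyfun_const], rule wact_poly, rule polyfun_const)

lemma polyfun_finite_zeros:
  fixes f :: "'k::field_char_0 \<Rightarrow> 'k"
  assumes "polyfun f" "f a \<noteq> 0"
  shows "finite {l::nat. f (of_nat l) = 0}"
proof -
  obtain P where P: "\<And>x. f x = poly P x" using assms(1) by (auto simp: polyfun_def)
  have "P \<noteq> 0" using assms(2) P by auto
  then have "finite {x. f x = 0}" using poly_roots_finite[of P] P by simp
  then have "finite (of_nat -` {x. f x = 0} :: nat set)"
    by (rule finite_vimageI) (simp add: inj_on_def)
  then show ?thesis by (simp add: vimage_def)
qed


lemma Qq_proper: "Qq \<noteq> carrier (UU :: (gen list \<Rightarrow> 'k::field) set ring)"
proof
  assume "Qq = carrier (UU :: (gen list \<Rightarrow> 'k::field) set ring)"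
  then have "\<one>\<^bsub>(UU :: (gen list \<Rightarrow> 'k::field) set ring)\<^esub> \<in> Qq" using one_U_carrier by blast
  moreover have c1: "\<one>\<^bsub>(FA :: (gen list \<Rightarrow> 'k::field) ring)\<^esub> \<in> carrier FA"
    by (rule ring.ring_simprules(6)[OF ring_fa])
  ultimately have "\<one>\<^bsub>FA\<^esub> \<in> (JQ :: (gen list \<Rightarrow> 'k::field) set)"
    using memQq[OF c1] by (simp add: U_one)
  then show False using one_notin_Jl[of 0] by (auto simp: JQ_def)
qed

lemma Qq_sub_Pl: "(Qq :: (gen list \<Rightarrow> 'k::field) set set) \<subseteq> Pl l"
  unfolding Qq_def Pl_def JQ_def by auto

lemma cofinite_notin:
  assumes p: "p \<in> carrier FA" and pn: "p \<notin> (JQ :: (gen list \<Rightarrow> 'k::field_char_0) set)"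
  shows "\<exists>N. \<forall>l\<ge>N. p \<notin> Jl l"
proof -
  obtain m where "p \<notin> Jl m" using p pn by (auto simp: JQ_def)
  then obtain v0 i0 where v0: "v0 \<in> Vl m" "act (of_nat m) p v0 i0 \<noteq> (0::'k)" using notin_Jl[OF p] by blast
  have fin: "finite {l::nat. act (of_nat l) p v0 i0 = 0}"
    by (rule polyfun_finite_zeros[OF act_poly v0(2)])
  define N where "N = Suc (Max ({l::nat. act (of_nat l) p v0 i0 = 0} \<union> {m}))"
  have "p \<notin> Jl l" if "l \<ge> N" for l
  proof
    assume "p \<in> Jl l"
    have "m \<le> Max ({l::nat. act (of_nat l) p v0 i0 = 0} \<union> {m})" using fin by (intro Max_ge) auto
    then have "l > m" using that by (simp add: N_def)
    then have "v0 \<in> Vl l" using v0(1) by (auto simp: Vl_def)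
    then have "act (of_nat l) p v0 i0 = 0" using \<open>p \<in> Jl l\<close> by (auto simp: Jl_def)
    then have "l \<le> Max ({l::nat. act (of_nat l) p v0 i0 = 0} \<union> {m})" using fin by (intro Max_ge) auto
    then show False using that by (simp add: N_def)
  qed
  then show ?thesis by blast
qed

lemma Qq_prime:
  assumes I1: "ideal I1 (UU :: (gen list \<Rightarrow> 'k::field_char_0) set ring)" and J1: "ideal J1 (UU :: (gen list \<Rightarrow> 'k::field_char_0) set ring)"
    and prod: "\<forall>a\<in>I1. \<forall>b\<in>J1. a \<otimes>\<^bsub>UU\<^esub> b \<in> Qq"
  shows "I1 \<subseteq> Qq \<or> J1 \<subseteq> Qq"
proof (rule ccontr)
  assume "\<not> (I1 \<subseteq> Qq \<or> J1 \<subseteq> Qq)"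
  then obtain a b where a: "a \<in> I1" "a \<notin> Qq" and b: "b \<in> J1" "b \<notin> Qq" by auto
  have "a \<in> carrier UU" using a(1) I1 ideal.axioms(1) additive_subgroup.a_subset by blast
  then obtain p where p: "p \<in> carrier FA" "a = II +>\<^bsub>FA\<^esub> p" using U_carrier by blast
  have "b \<in> carrier UU" using b(1) J1 ideal.axioms(1) additive_subgroup.a_subset by blast
  then obtain q where q: "q \<in> carrier FA" "b = II +>\<^bsub>FA\<^esub> q" using U_carrier by blast
  have pn: "p \<notin> JQ" using a(2) p memQq by blast
  have qn: "q \<notin> JQ" using b(2) q memQq by blast
  obtain N1 where N1: "\<forall>l\<ge>N1. p \<notin> Jl l" using cofinite_notin[OF p(1) pn] by blast
  obtain N2 where N2: "\<forall>l\<ge>N2. q \<notin> Jl l" using cofinite_notin[OF q(1) qn] by blast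
  define l where "l = max N1 N2"
  have "p \<notin> Jl l" using N1 by (simp add: l_def)
  then have "a \<notin> Pl l" using memPl[OF p(1), of l] p(2) by simp
  moreover have "q \<notin> Jl l" using N2 by (simp add: l_def)
  then have "b \<notin> Pl l" using memPl[OF q(1), of l] q(2) by simp
  moreover have "I1 \<subseteq> Pl l \<or> J1 \<subseteq> Pl l"
    using Pl_prime[OF I1 J1] prod Qq_sub_Pl by blast
  ultimately show False using a(1) b(1) by blast
qed

lemma Qq_spec: "Qq \<in> spec (UU :: (gen list \<Rightarrow> 'k::field_char_0) set ring)"
  unfolding spec_def using Qq_ideal Qq_proper Qq_prime by blast


definition Eonly :: "(gen list \<Rightarrow> 'k::field) \<Rightarrow> bool" where
  "Eonly p \<longleftrightarrow> (\<forall>w. p w \<noteq> 0 \<longrightarrow> set w \<subseteq> {gE})"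

definition HE :: "(gen list \<Rightarrow> 'k::field) set set" where
  "HE = {x. \<exists>p \<in> carrier FA. Eonly p \<and> x = II +>\<^bsub>FA\<^esub> p}"

lemma kE_eq: "(kE_sub :: (gen list \<Rightarrow> 'k::field) set ring) = UU \<lparr>carrier := HE\<rparr>"
  unfolding kE_sub_def HE_def Eonly_def by simp

lemma set_E_rep: "set w \<subseteq> {gE} \<Longrightarrow> w = replicate (length w) gE"
  by (induction w) auto

lemma Eonly_mult:
  fixes p q :: "gen list \<Rightarrow> 'k::field"
  assumes "Eonly p" "Eonly q"
  shows "Eonly (p \<otimes>\<^bsub>FA\<^esub> q)"
  unfolding Eonly_def
proof (intro allI impI)
  fix w assume "(p \<otimes>\<^bsub>FA\<^esub> q) w \<noteq> 0"
  then obtain i where "p (take i w) * q (drop i w) \<noteq> 0"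
    unfolding fa_mult by (metis (mono_tags, lifting) sum.neutral)
  then have "set (take i w) \<subseteq> {gE}" "set (drop i w) \<subseteq> {gE}" using assms by (auto simp: Eonly_def)
  then show "set w \<subseteq> {gE}" by (metis Un_subset_iff append_take_drop_id set_append)
qed

lemma Eonly_comm:
  fixes p q :: "gen list \<Rightarrow> 'k::field"
  assumes "Eonly p" "Eonly q"
  shows "p \<otimes>\<^bsub>FA\<^esub> q = q \<otimes>\<^bsub>FA\<^esub> p"
proof
  fix w
  show "(p \<otimes>\<^bsub>FA\<^esub> q) w = (q \<otimes>\<^bsub>FA\<^esub> p) w"
  proof (cases "set w \<subseteq> {gE}")
    case True
    define n where "n = length w"
    have w: "w = replicate n gE" using set_E_rep[OF True] by (simp add: n_def)
    have "(p \<otimes>\<^bsub>FA\<^esub> q) w = (\<Sum>i=0..n. p (replicate i gE) * q (replicate (n - i) gE))"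
      unfolding fa_mult w by (intro sum.cong) (auto simp: min_def atLeast0AtMost)
    also have "\<dots> = (\<Sum>i=0..n. p (replicate (n - i) gE) * q (replicate (n - (n - i)) gE))"
      by (subst sum.atLeastAtMost_rev) simp
    also have "\<dots> = (\<Sum>i=0..n. q (replicate i gE) * p (replicate (n - i) gE))"
      by (intro sum.cong) (auto simp: mult.commute)
    also have "\<dots> = (q \<otimes>\<^bsub>FA\<^esub> p) w"
      unfolding fa_mult w by (intro sum.cong) (auto simp: min_def atLeast0AtMost)
    finally show ?thesis .
  next
    case False
    have z: "p (take i w) * q (drop i w) = 0" "q (take i w) * p (drop i w) = 0" for i
    proof -
      have "\<not> (set (take i w) \<subseteq> {gE} \<and> set (drop i w) \<subseteq> {gE})"
        using False by (metis Un_subset_iff append_take_drop_id set_append)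
      then show "p (take i w) * q (drop i w) = 0" "q (take i w) * p (drop i w) = 0"
        using assms by (auto simp: Eonly_def)
    qed
    show ?thesis unfolding fa_mult by (simp add: z)
  qed
qed

lemma U_neg:
  assumes "p \<in> carrier (FA :: (gen list \<Rightarrow> 'k::field) ring)"
  shows "\<ominus>\<^bsub>UU\<^esub> (II +>\<^bsub>FA\<^esub> p) = II +>\<^bsub>FA\<^esub> (\<ominus>\<^bsub>FA\<^esub> p)"
proof -
  interpret h: ring_hom_ring "FA :: (gen list \<Rightarrow> 'k::field) ring" UU "a_r_coset FA II"
    unfolding U_sl2_def by (rule ideal.rcos_ring_hom_ring[OF I_ideal])
  show ?thesis using h.hom_a_inv[OF assms] by simp
qed

lemma HE_sub: "HE \<subseteq> carrier (UU :: (gen list \<Rightarrow> 'k::field) set ring)"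
  unfolding HE_def using U_carrier by blast

lemma HE_subring: "subring HE (UU :: (gen list \<Rightarrow> 'k::field) set ring)"
proof -
  interpret R: ring "FA :: (gen list \<Rightarrow> 'k::field) ring" by (rule ring_fa)
  interpret U: ring "UU :: (gen list \<Rightarrow> 'k::field) set ring" by (rule U_ring)
  show ?thesis
  proof (rule U.subringI[OF HE_sub])
    show "\<one>\<^bsub>UU\<^esub> \<in> (HE :: (gen list \<Rightarrow> 'k::field) set set)"
      unfolding HE_def U_one using R.one_closed
      by (intro CollectI bexI[of _ "\<one>\<^bsub>FA\<^esub>"]) (auto simp: Eonly_def fa_one)
  next
    fix h :: "(gen list \<Rightarrow> 'k::field) set" assume "h \<in> HE"
    then obtain p where p: "p \<in> carrier FA" "Eonly p" "h = II +>\<^bsub>FA\<^esub> p" by (auto simp: HE_def)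
    then show "\<ominus>\<^bsub>UU\<^esub> h \<in> HE" unfolding HE_def
      by (intro CollectI bexI[of _ "\<ominus>\<^bsub>FA\<^esub> p"]) (auto simp: U_neg fa_a_inv Eonly_def fa_carrier)
  next
    fix h1 h2 :: "(gen list \<Rightarrow> 'k::field) set" assume "h1 \<in> HE" "h2 \<in> HE"
    then obtain p q where p: "p \<in> carrier FA" "Eonly p" "h1 = II +>\<^bsub>FA\<^esub> p"
      and q: "q \<in> carrier FA" "Eonly q" "h2 = II +>\<^bsub>FA\<^esub> q" by (auto simp: HE_def)
    show "h1 \<otimes>\<^bsub>UU\<^esub> h2 \<in> HE" unfolding HE_def
      using p q by (intro CollectI bexI[of _ "p \<otimes>\<^bsub>FA\<^esub> q"]) (auto simp: U_mult Eonly_mult)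
    have E: "Eonly (p \<oplus>\<^bsub>FA\<^esub> q)" unfolding Eonly_def fa_add
    proof (intro allI impI)
      fix w assume "p w + q w \<noteq> 0"
      then have "p w \<noteq> 0 \<or> q w \<noteq> 0" by auto
      then show "set w \<subseteq> {gE}" using p(2) q(2) by (auto simp: Eonly_def)
    qed
    show "h1 \<oplus>\<^bsub>UU\<^esub> h2 \<in> HE" unfolding HE_def
      using p q E R.a_closed[OF p(1) q(1)] by (intro CollectI bexI[of _ "p \<oplus>\<^bsub>FA\<^esub> q"]) (auto simp: U_add)
  qed
qed

lemma RR_cring: "cring (kE_sub :: (gen list \<Rightarrow> 'k::field) set ring)"
proof -
  interpret U: ring "UU :: (gen list \<Rightarrow> 'k::field) set ring" by (rule U_ring)
  have "subcring HE (UU :: (gen list \<Rightarrow> 'k::field) set ring)"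
  proof (rule U.subcringI[OF HE_subring])
    fix h1 h2 :: "(gen list \<Rightarrow> 'k::field) set" assume "h1 \<in> HE" "h2 \<in> HE"
    then obtain p q where p: "p \<in> carrier FA" "Eonly p" "h1 = II +>\<^bsub>FA\<^esub> p"
      and q: "q \<in> carrier FA" "Eonly q" "h2 = II +>\<^bsub>FA\<^esub> q" by (auto simp: HE_def)
    then show "h1 \<otimes>\<^bsub>UU\<^esub> h2 = h2 \<otimes>\<^bsub>UU\<^esub> h1" by (simp add: U_mult Eonly_comm)
  qed
  then show ?thesis unfolding kE_eq using U.subcring_iff[OF HE_sub] by simp
qed


definition dw :: "gen list \<Rightarrow> gen list \<Rightarrow> 'k::field" where
  "dw a = (\<lambda>x. if x = a then 1 else 0)"

lemma dw_carrier: "dw a \<in> carrier (FA :: (gen list \<Rightarrow> 'k::field) ring)"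
  unfolding fa_carrier dw_def by (auto intro: finite_subset[of _ "{a}"])

lemma fa_gen_dw: "fa_gen g = dw [g]"
  by (simp add: fa_gen_def dw_def)

lemma dw_mult: "dw a \<otimes>\<^bsub>FA\<^esub> dw b = (dw (a @ b) :: gen list \<Rightarrow> 'k::field)"
proof
  fix x
  have eq: "(take i x = a \<and> drop i x = b) \<longleftrightarrow> (x = a @ b \<and> i = length a)" if "i \<le> length x" for i
  proof
    assume h: "take i x = a \<and> drop i x = b"
    then have "x = a @ b" by (metis append_take_drop_id)
    moreover have "length a = i" using h that by auto
    ultimately show "x = a @ b \<and> i = length a" by simp
  qed auto
  have "(dw a \<otimes>\<^bsub>(FA :: (gen list \<Rightarrow> 'k::field) ring)\<^esub> dw b) x = (\<Sum>i\<le>length x. (if x = a @ b \<and> i = length a then 1 else 0 :: 'k))"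
    unfolding fa_mult dw_def by (intro sum.cong refl) (use eq in auto)
  also have "\<dots> = dw (a @ b) x"
    by (cases "x = a @ b") (simp_all add: dw_def)
  finally show "(dw a \<otimes>\<^bsub>FA\<^esub> dw b) x = (dw (a @ b) x :: 'k)" .
qed

lemma act_dw: "act c (dw a) v i = wact c a v i"
proof -
  have "act c (dw a) v i = (\<Sum>w\<in>{a}. dw a w * wact c w v i)"
    by (rule act_super) (auto simp: dw_def)
  then show ?thesis by (simp add: dw_def)
qed

lemma Eonly_dw: "Eonly (dw (replicate n gE))"
  by (simp add: Eonly_def dw_def set_replicate_conv_if)

definition edeg :: "(gen list \<Rightarrow> 'k::field) \<Rightarrow> nat" where
  "edeg p = Max (length ` {w. p w \<noteq> 0})"

lemma deg_props:
  fixes p :: "gen list \<Rightarrow> 'k::field"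
  assumes c: "p \<in> carrier FA" and E: "Eonly p" and nz: "p w0 \<noteq> 0"
  shows "\<And>w. p w \<noteq> 0 \<Longrightarrow> length w \<le> edeg p"
    and "p (replicate (edeg p) gE) \<noteq> 0"
    and "\<And>n. n > edeg p \<Longrightarrow> p (replicate n gE) = 0"
proof -
  have fin: "finite {w. p w \<noteq> 0}" using c by (simp add: fa_carrier)
  show le: "length w \<le> edeg p" if "p w \<noteq> 0" for w
    unfolding edeg_def using fin that by (intro Max_ge) auto
  have "edeg p \<in> length ` {w. p w \<noteq> 0}" unfolding edeg_def using fin nz by (intro Max_in) auto
  then obtain w where w: "p w \<noteq> 0" "length w = edeg p" by auto
  then have "w = replicate (edeg p) gE" using E set_E_rep[of w] by (auto simp: Eonly_def)
  then show "p (replicate (edeg p) gE) \<noteq> 0" using w by simp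
  show "p (replicate n gE) = 0" if "n > edeg p" for n
    using le[of "replicate n gE"] that by fastforce
qed

lemma Eonly_notin_Jl:
  fixes p :: "gen list \<Rightarrow> 'k::field_char_0"
  assumes c: "p \<in> carrier FA" and E: "Eonly p" and nz: "p w0 \<noteq> 0"
  shows "p \<notin> Jl (edeg p)"
proof
  assume J: "p \<in> Jl (edeg p)"
  define m where "m = edeg p"
  define v :: "nat \<Rightarrow> 'k" where "v = (\<lambda>i. if i = m then 1 else 0)"
  have vV: "v \<in> Vl m" by (simp add: v_def Vl_def)
  have fin: "finite {w. p w \<noteq> 0}" using c by (simp add: fa_carrier)
  have "act (of_nat m) p v 0 = (\<Sum>w\<in>{w. p w \<noteq> 0}. p w * (if w = replicate m gE then fact m else 0))"
    unfolding act_def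
  proof (intro sum.cong refl)
    fix w assume "w \<in> {w. p w \<noteq> 0}"
    then have w: "w = replicate (length w) gE" using E set_E_rep[of w] by (auto simp: Eonly_def)
    have "wact (of_nat m) w v 0 = pochhammer 1 (length w) * v (length w)"
      by (subst w) (simp add: wact_E)
    also have "\<dots> = (if w = replicate m gE then fact m else 0)"
      by (subst (2) w) (auto simp: v_def pochhammer_fact)
    finally show "p w * wact (of_nat m) w v 0 = p w * (if w = replicate m gE then fact m else 0)" by simp
  qed
  also have "\<dots> = p (replicate m gE) * fact m"
    using fin deg_props(2)[OF c E nz] by (simp add: if_distrib[of "\<lambda>x. p _ * x"] sum.delta cong: if_cong add: m_def)
  finally have "act (of_nat m) p v 0 = p (replicate m gE) * fact m" .
  moreover have "act (of_nat m) p v 0 = 0" using J vV by (auto simp: Jl_def m_def)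
  ultimately show False using deg_props(2)[OF c E nz] by (simp add: m_def)
qed

lemma Eonly_notin_JQ:
  fixes p :: "gen list \<Rightarrow> 'k::field_char_0"
  assumes "p \<in> carrier FA" "Eonly p" "p w0 \<noteq> 0"
  shows "p \<notin> JQ"
  using Eonly_notin_Jl[OF assms] by (auto simp: JQ_def)

lemma Eonly_prod_nz:
  fixes p q :: "gen list \<Rightarrow> 'k::field"
  assumes cp: "p \<in> carrier FA" and Ep: "Eonly p" and np: "p w0 \<noteq> 0"
    and cq: "q \<in> carrier FA" and Eq: "Eonly q" and nq: "q w1 \<noteq> 0"
  shows "(p \<otimes>\<^bsub>FA\<^esub> q) (replicate (edeg p + edeg q) gE) \<noteq> 0"
proof -
  define n where "n = edeg p + edeg q"
  have "(p \<otimes>\<^bsub>FA\<^esub> q) (replicate n gE) = (\<Sum>i\<le>n. p (replicate i gE) * q (replicate (n - i) gE))"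
    unfolding fa_mult by (intro sum.cong) (auto simp: min_def)
  also have "\<dots> = (\<Sum>i\<le>n. if i = edeg p then p (replicate (edeg p) gE) * q (replicate (edeg q) gE) else 0)"
  proof (intro sum.cong refl)
    fix i assume "i \<in> {..n}"
    show "p (replicate i gE) * q (replicate (n - i) gE) = (if i = edeg p then p (replicate (edeg p) gE) * q (replicate (edeg q) gE) else 0)"
    proof (cases "i = edeg p")
      case False
      show ?thesis
      proof (cases "i > edeg p")
        case True then show ?thesis using deg_props(3)[OF cp Ep np] by simp
      next
        case False
        then have "n - i > edeg q" using \<open>i \<noteq> edeg p\<close> by (simp add: n_def)
        then show ?thesis using deg_props(3)[OF cq Eq nq] \<open>i \<noteq> edeg p\<close> by simp
      qed
    qed (simp add: n_def)
  qed
  also have "\<dots> = p (replicate (edeg p) gE) * q (replicate (edeg q) gE)"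
    by (simp add: n_def)
  finally show ?thesis using deg_props(2)[OF cp Ep np] deg_props(2)[OF cq Eq nq] by (simp add: n_def)
qed


abbreviation RR :: "(gen list \<Rightarrow> 'k::field) set ring" where "RR \<equiv> kE_sub"

lemma RR_simps:
  "carrier (RR :: (gen list \<Rightarrow> 'k::field) set ring) = HE"
  "x \<otimes>\<^bsub>(RR :: (gen list \<Rightarrow> 'k::field) set ring)\<^esub> y = x \<otimes>\<^bsub>UU\<^esub> y"
  "\<one>\<^bsub>(RR :: (gen list \<Rightarrow> 'k::field) set ring)\<^esub> = \<one>\<^bsub>UU\<^esub>"
  "\<zero>\<^bsub>(RR :: (gen list \<Rightarrow> 'k::field) set ring)\<^esub> = II"
  by (simp_all add: kE_eq U_zero)

lemma UE_eq: "(U_E :: (gen list \<Rightarrow> 'k::field) set) = II +>\<^bsub>FA\<^esub> dw [gE]"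
  by (simp add: U_E_def fa_gen_dw)

lemma dw_rep_carrier: "dw (replicate n gE) \<in> carrier FA" by (rule dw_carrier)

lemma UE_HE: "(U_E :: (gen list \<Rightarrow> 'k::field) set) \<in> HE"
  unfolding UE_eq HE_def using dw_carrier Eonly_dw[of 1] by auto

lemma nz_rep:
  assumes "p \<in> carrier (FA :: (gen list \<Rightarrow> 'k::field) ring)" "II +>\<^bsub>FA\<^esub> p \<noteq> II"
  shows "\<exists>w. p w \<noteq> 0"
proof (rule ccontr)
  assume "\<not> (\<exists>w. p w \<noteq> 0)"
  then have "p = \<zero>\<^bsub>FA\<^esub>" by (auto simp: fa_zero)
  moreover have "\<zero>\<^bsub>(FA :: (gen list \<Rightarrow> 'k::field) ring)\<^esub> \<in> II"
    using ideal.axioms(1)[OF I_ideal] additive_subgroup.zero_closed by blast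
  ultimately show False using assms coset_eq_I by blast
qed

lemma JQ_Eonly_zero:
  assumes "p \<in> carrier (FA :: (gen list \<Rightarrow> 'k::field_char_0) ring)" "Eonly p" "p \<in> JQ"
  shows "II +>\<^bsub>FA\<^esub> p = II"
  using nz_rep[OF assms(1)] Eonly_notin_JQ[OF assms(1,2)] assms(3) by blast

lemma UE_ne: "(U_E :: (gen list \<Rightarrow> 'k::field_char_0) set) \<noteq> II"
proof
  assume "(U_E :: (gen list \<Rightarrow> 'k::field_char_0) set) = II"
  then have "dw [gE] \<in> (II :: (gen list \<Rightarrow> 'k::field_char_0) set)"
    using coset_eq_I[OF dw_carrier] UE_eq by metis
  then have "dw [gE] \<in> (JQ :: (gen list \<Rightarrow> 'k::field_char_0) set)" using I_JQ by blast
  moreover have "dw [gE] \<notin> (JQ :: (gen list \<Rightarrow> 'k::field_char_0) set)"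
    using Eonly_notin_JQ[OF dw_carrier Eonly_dw[of 1], of "[gE]"] by (simp add: dw_def)
  ultimately show False by blast
qed

lemma zero_spec: "{II} \<in> spec (RR :: (gen list \<Rightarrow> 'k::field_char_0) set ring)"
proof -
  interpret C: cring "RR :: (gen list \<Rightarrow> 'k::field_char_0) set ring" by (rule RR_cring)
  have id: "ideal {II} (RR :: (gen list \<Rightarrow> 'k::field_char_0) set ring)"
    using C.zeroideal by (simp add: RR_simps)
  have pr: "{II} \<noteq> carrier (RR :: (gen list \<Rightarrow> 'k::field_char_0) set ring)"
    using UE_HE UE_ne by (auto simp: RR_simps)
  have prime: "I' \<subseteq> {II} \<or> J' \<subseteq> {II}"
    if I': "ideal I' (RR :: (gen list \<Rightarrow> 'k::field_char_0) set ring)" and J': "ideal J' (RR :: (gen list \<Rightarrow> 'k::field_char_0) set ring)"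
      and prod: "\<forall>a\<in>I'. \<forall>b\<in>J'. a \<otimes>\<^bsub>RR\<^esub> b \<in> {II}" for I' J'
  proof (rule ccontr)
    assume "\<not> (I' \<subseteq> {II} \<or> J' \<subseteq> {II})"
    then obtain a b where a: "a \<in> I'" "a \<noteq> II" and b: "b \<in> J'" "b \<noteq> II" by auto
    have "a \<in> HE" using a(1) I' ideal.axioms(1) additive_subgroup.a_subset RR_simps(1) by blast
    then obtain p where p: "p \<in> carrier FA" "Eonly p" "a = II +>\<^bsub>FA\<^esub> p" by (auto simp: HE_def)
    have "b \<in> HE" using b(1) J' ideal.axioms(1) additive_subgroup.a_subset RR_simps(1) by blast
    then obtain q where q: "q \<in> carrier FA" "Eonly q" "b = II +>\<^bsub>FA\<^esub> q" by (auto simp: HE_def)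
    obtain w0 where w0: "p w0 \<noteq> 0" using nz_rep[OF p(1)] a(2) p(3) by blast
    obtain w1 where w1: "q w1 \<noteq> 0" using nz_rep[OF q(1)] b(2) q(3) by blast
    have pqc: "p \<otimes>\<^bsub>FA\<^esub> q \<in> carrier FA" using ring.ring_simprules(5)[OF ring_fa p(1) q(1)] .
    have "a \<otimes>\<^bsub>RR\<^esub> b = II" using prod a(1) b(1) by blast
    then have "II +>\<^bsub>FA\<^esub> (p \<otimes>\<^bsub>FA\<^esub> q) = II" using p q by (simp add: RR_simps U_mult)
    then have "p \<otimes>\<^bsub>FA\<^esub> q \<in> JQ" using coset_eq_I[OF pqc] I_JQ by blast
    moreover have "p \<otimes>\<^bsub>FA\<^esub> q \<notin> JQ"
      using Eonly_notin_JQ[OF pqc Eonly_mult[OF p(2) q(2)] Eonly_prod_nz[OF p(1) p(2) w0 q(1) q(2) w1]] .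
    ultimately show False by blast
  qed
  show ?thesis unfolding spec_def using id pr prime by blast
qed

lemma Qq_corr: "{II} \<in> corr_r (UU :: (gen list \<Rightarrow> 'k::field_char_0) set ring) RR Qq"
proof -
  have sub: "Qq \<inter> carrier (RR :: (gen list \<Rightarrow> 'k::field_char_0) set ring) \<subseteq> {II}"
  proof
    fix x :: "(gen list \<Rightarrow> 'k) set" assume "x \<in> Qq \<inter> carrier RR"
    then have x: "x \<in> Qq" "x \<in> HE" by (auto simp: RR_simps)
    then obtain p where p: "p \<in> carrier FA" "Eonly p" "x = II +>\<^bsub>FA\<^esub> p" by (auto simp: HE_def)
    have "p \<in> JQ" using memQq[OF p(1)] x(1) p(3) by simp
    then show "x \<in> {II}" using JQ_Eonly_zero[OF p(1,2)] p(3) by simp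
  qed
  have mini: "Q' = {II}" if "Q' \<in> spec (RR :: (gen list \<Rightarrow> 'k::field_char_0) set ring)" "Q' \<subseteq> {II}" for Q'
  proof -
    have "ideal Q' (RR :: (gen list \<Rightarrow> 'k::field_char_0) set ring)" using that(1) by (simp add: spec_def)
    then have "\<zero>\<^bsub>(RR :: (gen list \<Rightarrow> 'k::field_char_0) set ring)\<^esub> \<in> Q'"
      using ideal.axioms(1) additive_subgroup.zero_closed by blast
    then show ?thesis using that(2) by (auto simp: RR_simps)
  qed
  show ?thesis unfolding corr_r_def using zero_spec sub mini by blast
qed


definition eE :: "nat \<Rightarrow> (gen list \<Rightarrow> 'k::field) set" where
  "eE n = II +>\<^bsub>FA\<^esub> dw (replicate n gE)"

lemma eE_HE: "eE n \<in> HE"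
  unfolding eE_def HE_def using dw_carrier Eonly_dw by blast

lemma eE_Suc: "(U_E :: (gen list \<Rightarrow> 'k::field) set) \<otimes>\<^bsub>UU\<^esub> eE n = eE (Suc n)"
  unfolding UE_eq eE_def by (simp add: U_mult dw_carrier dw_mult)

lemma eE_0: "eE 0 = \<one>\<^bsub>(UU :: (gen list \<Rightarrow> 'k::field) set ring)\<^esub>"
  unfolding eE_def U_one by (simp add: fa_one dw_def)

lemma eE_Pl: "(eE (Suc l) :: (gen list \<Rightarrow> 'k::field) set) \<in> Pl l"
proof -
  have "dw (replicate (Suc l) gE) \<in> (Jl l :: (gen list \<Rightarrow> 'k::field) set)"
    using dw_carrier by (auto simp: Jl_def act_dw wact_E Vl_def simp del: replicate_Suc)
  then show ?thesis unfolding eE_def using memPl[OF dw_carrier] by blast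
qed

lemma prime_contains_UE:
  assumes Q': "Q' \<in> spec (RR :: (gen list \<Rightarrow> 'k::field) set ring)"
  shows "eE (Suc n) \<in> Q' \<Longrightarrow> U_E \<in> Q'"
proof (induction n)
  interpret C: cring "RR :: (gen list \<Rightarrow> 'k::field) set ring" by (rule RR_cring)
  have idQ: "ideal Q' (RR :: (gen list \<Rightarrow> 'k::field) set ring)" and nQ: "Q' \<noteq> carrier RR"
    and prQ: "\<And>I J. ideal I RR \<Longrightarrow> ideal J RR \<Longrightarrow> (\<forall>a\<in>I. \<forall>b\<in>J. a \<otimes>\<^bsub>RR\<^esub> b \<in> Q') \<Longrightarrow> I \<subseteq> Q' \<or> J \<subseteq> Q'"
    using Q' unfolding spec_def by blast+
  have step: "U_E \<in> Q' \<or> eE m \<in> Q'" if h: "eE (Suc m) \<in> Q'" for m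
  proof -
    have cE: "(U_E :: (gen list \<Rightarrow> 'k) set) \<in> carrier RR" "(eE m :: (gen list \<Rightarrow> 'k) set) \<in> carrier RR" using UE_HE eE_HE by (auto simp: RR_simps)
    have "(\<forall>a\<in>PIdl\<^bsub>RR\<^esub> (U_E :: (gen list \<Rightarrow> 'k) set). \<forall>b\<in>PIdl\<^bsub>RR\<^esub> (eE m :: (gen list \<Rightarrow> 'k) set). a \<otimes>\<^bsub>RR\<^esub> b \<in> Q')"
    proof (intro ballI)
      fix a b :: "(gen list \<Rightarrow> 'k) set" assume "a \<in> PIdl\<^bsub>RR\<^esub> U_E" "b \<in> PIdl\<^bsub>RR\<^esub> (eE m)"
      then obtain r s where r: "r \<in> carrier RR" "a = r \<otimes>\<^bsub>RR\<^esub> U_E" and s: "s \<in> carrier RR" "b = s \<otimes>\<^bsub>RR\<^esub> eE m"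
        by (auto simp: cgenideal_def)
      have "a \<otimes>\<^bsub>RR\<^esub> b = (r \<otimes>\<^bsub>RR\<^esub> s) \<otimes>\<^bsub>RR\<^esub> (U_E \<otimes>\<^bsub>RR\<^esub> eE m)"
        using r s cE by (simp add: C.m_ac)
      moreover have "(U_E :: (gen list \<Rightarrow> 'k) set) \<otimes>\<^bsub>RR\<^esub> eE m = eE (Suc m)" by (simp add: RR_simps eE_Suc)
      ultimately show "a \<otimes>\<^bsub>RR\<^esub> b \<in> Q'" using h r(1) s(1) ideal.I_l_closed[OF idQ] by simp
    qed
    then have "PIdl\<^bsub>RR\<^esub> (U_E :: (gen list \<Rightarrow> 'k) set) \<subseteq> Q' \<or> PIdl\<^bsub>RR\<^esub> (eE m :: (gen list \<Rightarrow> 'k) set) \<subseteq> Q'"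
      using prQ[OF C.cgenideal_ideal[OF cE(1)] C.cgenideal_ideal[OF cE(2)]] by blast
    then show ?thesis using C.cgenideal_self[OF cE(1)] C.cgenideal_self[OF cE(2)] by blast
  qed
  {
    case 0
    show ?case
    proof -
      have "U_E \<in> Q' \<or> eE 0 \<in> Q'" using step[OF 0] .
      moreover have "eE 0 \<notin> Q'"
      proof
        assume "eE 0 \<in> Q'"
        then have "\<one>\<^bsub>RR\<^esub> \<in> Q'" by (simp add: eE_0 RR_simps)
        then show False using ideal.one_imp_carrier[OF idQ] nQ by blast
      qed
      ultimately show ?thesis by blast
    qed
  next
    case (Suc n)
    show ?case using step[OF Suc.prems] Suc.IH by blast
  }
qed


abbreviation SE :: "(gen list \<Rightarrow> 'k::field) set set" where
  "SE \<equiv> {r \<otimes>\<^bsub>(kE_sub :: (gen list \<Rightarrow> 'k) set ring)\<^esub> U_E | r. r \<in> carrier kE_sub}"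

lemma Pl_pre: "Pl l \<in> corr_preim (UU :: (gen list \<Rightarrow> 'k::field_char_0) set ring) RR (zar_V RR SE)"
proof -
  have "Q' \<in> zar_V RR SE" if Q': "Q' \<in> corr_r (UU :: (gen list \<Rightarrow> 'k::field_char_0) set ring) RR (Pl l)" for Q'
  proof -
    have sp: "Q' \<in> spec (RR :: (gen list \<Rightarrow> 'k::field_char_0) set ring)" and sub: "Pl l \<inter> carrier RR \<subseteq> Q'"
      using Q' by (auto simp: corr_r_def)
    have "(eE (Suc l) :: (gen list \<Rightarrow> 'k) set) \<in> Q'" using eE_Pl eE_HE sub by (auto simp: RR_simps)
    then have UQ: "U_E \<in> Q'" using prime_contains_UE[OF sp] by blast
    have idQ: "ideal Q' (RR :: (gen list \<Rightarrow> 'k::field_char_0) set ring)" using sp by (simp add: spec_def)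
    have "SE \<subseteq> Q'" using ideal.I_l_closed[OF idQ UQ] by blast
    then show ?thesis using sp by (simp add: zar_V_def)
  qed
  then show ?thesis unfolding corr_preim_def using Pl_spec by blast
qed

lemma not_closed: "\<not> spec_closed (UU :: (gen list \<Rightarrow> 'k::field_char_0) set ring) (corr_preim UU RR (zar_V RR SE))"
proof
  assume "spec_closed (UU :: (gen list \<Rightarrow> 'k::field_char_0) set ring) (corr_preim UU RR (zar_V RR SE))"
  then obtain Y where Y: "Y \<subseteq> carrier (UU :: (gen list \<Rightarrow> 'k::field_char_0) set ring)"
    and eq: "corr_preim (UU :: (gen list \<Rightarrow> 'k::field_char_0) set ring) RR (zar_V RR SE) = zar_V UU Y"
    by (auto simp: spec_closed_def)
  have YP: "Y \<subseteq> Pl l" for l using Pl_pre[of l] eq by (auto simp: zar_V_def)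
  have YQ: "Y \<subseteq> Qq"
  proof
    fix y assume "y \<in> Y"
    then obtain p where p: "p \<in> carrier FA" "y = II +>\<^bsub>FA\<^esub> p" using Y U_carrier by blast
    have "p \<in> Jl l" for l using YP[of l] \<open>y \<in> Y\<close> memPl[OF p(1)] p(2) by blast
    then have "p \<in> JQ" using p(1) by (simp add: JQ_def)
    then show "y \<in> Qq" using memQq[OF p(1)] p(2) by simp
  qed
  then have "Qq \<in> zar_V (UU :: (gen list \<Rightarrow> 'k::field_char_0) set ring) Y" using Qq_spec by (simp add: zar_V_def)
  then have "Qq \<in> corr_preim (UU :: (gen list \<Rightarrow> 'k::field_char_0) set ring) RR (zar_V RR SE)" using eq by simp
  then have "corr_r (UU :: (gen list \<Rightarrow> 'k::field_char_0) set ring) RR Qq \<subseteq> zar_V RR SE" by (simp add: corr_preim_def)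
  then have "{II} \<in> zar_V (RR :: (gen list \<Rightarrow> 'k::field_char_0) set ring) SE" using Qq_corr by blast
  then have "SE \<subseteq> {II :: (gen list \<Rightarrow> 'k::field_char_0) set}" by (simp add: zar_V_def)
  moreover have "\<one>\<^bsub>(RR :: (gen list \<Rightarrow> 'k::field_char_0) set ring)\<^esub> \<otimes>\<^bsub>RR\<^esub> U_E \<in> SE"
    using ring.ring_simprules(6)[OF cring.axioms(1)[OF RR_cring]] by blast
  moreover have "\<one>\<^bsub>(RR :: (gen list \<Rightarrow> 'k::field_char_0) set ring)\<^esub> \<otimes>\<^bsub>RR\<^esub> U_E = U_E"
    using ring.ring_simprules(12)[OF cring.axioms(1)[OF RR_cring]] UE_HE by (simp add: RR_simps(1))
  ultimately show False using UE_ne by auto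
qed

theorem mainTheorem5:
  shows "\<not> corr_continuous (U_sl2 :: (gen list \<Rightarrow> 'k::field_char_0) set ring) kE_sub \<and>
         \<not> spec_closed (U_sl2 :: (gen list \<Rightarrow> 'k::field_char_0) set ring)
             (corr_preim (U_sl2 :: (gen list \<Rightarrow> 'k) set ring) kE_sub
                (zar_V (kE_sub :: (gen list \<Rightarrow> 'k) set ring)
                   {r \<otimes>\<^bsub>(kE_sub :: (gen list \<Rightarrow> 'k) set ring)\<^esub> U_E | r. r \<in> carrier kE_sub}))"
proof
  show nc: "\<not> spec_closed (U_sl2 :: (gen list \<Rightarrow> 'k::field_char_0) set ring)
             (corr_preim (U_sl2 :: (gen list \<Rightarrow> 'k) set ring) kE_sub
                (zar_V (kE_sub :: (gen list \<Rightarrow> 'k) set ring)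
                   {r \<otimes>\<^bsub>(kE_sub :: (gen list \<Rightarrow> 'k) set ring)\<^esub> U_E | r. r \<in> carrier kE_sub}))"
    by (rule not_closed)
  have "spec_closed (kE_sub :: (gen list \<Rightarrow> 'k::field_char_0) set ring)
          (zar_V (kE_sub :: (gen list \<Rightarrow> 'k) set ring)
                   {r \<otimes>\<^bsub>(kE_sub :: (gen list \<Rightarrow> 'k) set ring)\<^esub> U_E | r. r \<in> carrier kE_sub})"
  proof -
    have "{r \<otimes>\<^bsub>(kE_sub :: (gen list \<Rightarrow> 'k::field_char_0) set ring)\<^esub> U_E | r. r \<in> carrier kE_sub} \<subseteq> carrier kE_sub"
      using ring.ring_simprules(5)[OF cring.axioms(1)[OF RR_cring]] UE_HE by (auto simp: RR_simps(1))
    then show ?thesis unfolding spec_closed_def by blast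
  qed
  then show "\<not> corr_continuous (U_sl2 :: (gen list \<Rightarrow> 'k::field_char_0) set ring) kE_sub"
    using nc unfolding corr_continuous_def by blast
qed


end
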